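(* Consider the plant $\dot x=Ax+Bu+Ep(q)+E_ww$, $y=Cx$, $q=C_qx$ (i.e. $D=\mathbf 0$, $F_w=\mathbf 0$), where $p$ is globally Lipschitz continuous and the disturbance satisfies $\|w\|_\infty\le\omega_0$ for an arbitrary given $\omega_0>0$. Suppose there exist $\alpha_0>0$, $\mu>0$, a symmetric $P>0$ in $\mathbb{R}^{2n_x\times2n_x}$ and matrices $K_1,K_2,L_1,L_2$ such that, for the continuous-time closed-loop system formed by the plant, the observer $\dot{\hat x}=A\hat x+Bu+Ep(\hat q+L_1(\hat y-y))+L_2(\hat y-y)$, $\hat y=C\hat x$, $\hat q=C_q\hat x$, and the controller $u=K_1\hat x+K_2p(C_q\hat x)$, the function $V(z)=z^\top Pz$ with $z=(x^\top,(x-\hat x)^\top)^\top$ satisfies $\dot V\le-\alpha_0V$ along its trajectories when $w\equiv0$. Now consider the implementation with two asynchronous event-triggering mechanisms: output sampling times $t_0^y=0<t_1^y<\cdots$ with $y_s(t)=y(t_k^y)$ for $t\in[t_k^y,t_{k+1}^y)$ and $t_{k+1}^y=\inf\{t\mid t\ge t_k^y+\tau_y,\ \|y_s(t)-y(t)\|>\sigma_y\|y(t)\|+\epsilon_y\}$; observer $\dot{\hat x}=A\hat x+Bu+Ep(\hat q+L_1(\hat y-y_s))+L_2(\hat y-y_s)$, $\hat y=C\hat x$, $\hat q=C_q\hat x$; controller update times $t_0^u=0<t_1^u<\cdots$ with $\hat x_s(t)=\hat x(t_k^u)$ for $t\in[t_k^u,t_{k+1}^u)$, $t_{k+1}^u=\inf\{t\mid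 t\ge t_k^u+\tau_u,\ \|\hat x_s(t)-\hat x(t)\|>\sigma_u\|\hat x(t)\|+\epsilon_u\}$, and input $u(t)=K_1\hat x_s(t)+K_2p(C_q\hat x_s(t))$. Then positive numbers $\tau_y,\sigma_y,\epsilon_y,\tau_u,\sigma_u,\epsilon_u$ can be chosen such that this event-triggered closed-loop system is input-to-state practically stable with respect to $w$.
   Context: Plant: $x\in\mathbb{R}^{n_x}$ state, $u\in\mathbb{R}^{n_u}$ input, $y\in\mathbb{R}^{n_y}$ output, $w\in\mathbb{R}^{n_w}$ unknown measurable disturbance; $A,B,C,C_q,E,E_w$ constant real matrices of compatible sizes; $p:\mathbb{R}^{n_q}\to\mathbb{R}^{n_p}$ known with $p(0)=0$. The closed loop is input-to-state practically stable (ISpS) w.r.t. $w$ if there exist $\beta_1\in\mathcal{KL}$, $\beta_2\in\mathcal K$ and a constant $d\ge0$ such that for every initial condition $(x(0),\hat x(0))$ and every admissible disturbance $w$, $\|z(t)\|\le\beta_1(\|z(0)\|,t)+\beta_2(\|w\|_\infty)+d$ for all $t\ge0$, where $z=(x^\top,(x-\hat x)^\top)^\top$ and $\|w\|_\infty=\sup_{t\ge0}\|w(t)\|$. *)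

theory Defs
  imports "HOL-Analysis.Analysis"
begin

text \<open>Comparison function classes (Khalil's convention).\<close>

definition class_K :: "(real \<Rightarrow> real) \<Rightarrow> bool" where
  "class_K \<alpha> \<longleftrightarrow> continuous_on {0..} \<alpha> \<and> strict_mono_on {0..} \<alpha> \<and> \<alpha> 0 = 0"

definition class_KL :: "(real \<Rightarrow> real \<Rightarrow> real) \<Rightarrow> bool" where
  "class_KL \<beta> \<longleftrightarrow>
     continuous_on ({0..} \<times> {0..}) (\<lambda>(r, s). \<beta> r s) \<and>
     (\<forall>s\<ge>0. class_K (\<lambda>r. \<beta> r s)) \<and>
     (\<forall>r\<ge>0. antimono_on {0..} (\<lambda>s. \<beta> r s) \<and> ((\<lambda>s. \<beta> r s) \<longlongrightarrow> 0) at_top)"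

text \<open>Stacking of two vectors of R^{n_x} into a vector of R^{2 n_x}.\<close>

definition stack :: "real^'n \<Rightarrow> real^'n \<Rightarrow> real^('n + 'n)" where
  "stack a b = (\<chi> i. case i of Inl j \<Rightarrow> a $ j | Inr j \<Rightarrow> b $ j)"

text \<open>Solutions (Caratheodory sense, on [0,oo)) of the closed loop with two asynchronous
  event-triggering mechanisms. Sampling times are extended reals; an infimum over an empty
  set is +oo, meaning no further event occurs.\<close>

definition etm_solution ::
  "real^'x^'x \<Rightarrow> real^'u^'x \<Rightarrow> real^'x^'y \<Rightarrow> real^'x^'q \<Rightarrow> real^'p^'x \<Rightarrow> real^'w^'x \<Rightarrow>
   (real^'q \<Rightarrow> real^'p) \<Rightarrow> real^'x^'u \<Rightarrow> real^'p^'u \<Rightarrow> real^'y^'q \<Rightarrow> real^'y^'x \<Rightarrow>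
   real \<Rightarrow> real \<Rightarrow> real \<Rightarrow> real \<Rightarrow> real \<Rightarrow> real \<Rightarrow>
   (real \<Rightarrow> real^'w) \<Rightarrow> (real \<Rightarrow> real^'x) \<Rightarrow> (real \<Rightarrow> real^'x) \<Rightarrow>
   (nat \<Rightarrow> ereal) \<Rightarrow> (nat \<Rightarrow> ereal) \<Rightarrow> (real \<Rightarrow> real^'y) \<Rightarrow> (real \<Rightarrow> real^'x) \<Rightarrow> bool" where
  "etm_solution A B C Cq E Ew p K1 K2 L1 L2 \<tau>y \<sigma>y \<epsilon>y \<tau>u \<sigma>u \<epsilon>u w x xh ty tu ys xhs \<longleftrightarrow>
     ty 0 = 0 \<and> tu 0 = 0 \<and>
     (\<forall>k. ty (Suc k) = Inf {ereal t | t. ty k + ereal \<tau>y \<le> ereal t \<and>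
          norm (C *v x (real_of_ereal (ty k)) - C *v x t) > \<sigma>y * norm (C *v x t) + \<epsilon>y}) \<and>
     (\<forall>k. tu (Suc k) = Inf {ereal t | t. tu k + ereal \<tau>u \<le> ereal t \<and>
          norm (xh (real_of_ereal (tu k)) - xh t) > \<sigma>u * norm (xh t) + \<epsilon>u}) \<and>
     (\<forall>k t. ty k \<le> ereal t \<and> ereal t < ty (Suc k) \<longrightarrow> ys t = C *v x (real_of_ereal (ty k))) \<and>
     (\<forall>k t. tu k \<le> ereal t \<and> ereal t < tu (Suc k) \<longrightarrow> xhs t = xh (real_of_ereal (tu k))) \<and>
     (\<forall>t\<ge>0. ((\<lambda>s. A *v x s + B *v (K1 *v xhs s + K2 *v p (Cq *v xhs s))
                  + E *v p (Cq *v x s) + Ew *v w s) has_integral (x t - x 0)) {0..t}) \<and>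
     (\<forall>t\<ge>0. ((\<lambda>s. A *v xh s + B *v (K1 *v xhs s + K2 *v p (Cq *v xhs s))
                  + E *v p (Cq *v xh s + L1 *v (C *v xh s - ys s))
                  + L2 *v (C *v xh s - ys s)) has_integral (xh t - xh 0)) {0..t})"

end

theory Submission
  imports Defs "HOL-Real_Asymp.Real_Asymp"
begin

lemma stack_nth_Inl[simp]: "stack a b $ Inl i = a $ i" by (simp add: stack_def)
lemma stack_nth_Inr[simp]: "stack a b $ Inr i = b $ i" by (simp add: stack_def)
lemma inner_stack: "stack a b \<bullet> stack c d = a \<bullet> c + b \<bullet> d"
proof -
  have "stack a b \<bullet> stack c d = (\<Sum>i\<in>range Inl \<union> range Inr. stack a b $ i * stack c d $ i)"
    by (simp add: inner_vec_def UNIV_sum)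
  also have "\<dots> = (\<Sum>i\<in>range Inl. stack a b $ i * stack c d $ i) + (\<Sum>i\<in>range Inr. stack a b $ i * stack c d $ i)"
    by (rule sum.union_disjoint) auto
  also have "\<dots> = a \<bullet> c + b \<bullet> d"
    by (simp add: sum.reindex inner_vec_def)
  finally show ?thesis .
qed
lemma stack_add: "stack (a + b) (c + d) = stack a c + stack b d"
  by (simp add: vec_eq_iff stack_def split: sum.split)
lemma stack_diff: "stack (a - b) (c - d) = stack a c - stack b d"
  by (simp add: vec_eq_iff stack_def split: sum.split)
lemma stack_scale: "stack (r *\<^sub>R a) (r *\<^sub>R c) = r *\<^sub>R stack a c"
  by (simp add: vec_eq_iff stack_def split: sum.split)
lemma stack_zero: "stack 0 0 = 0"
  by (simp add: vec_eq_iff stack_def split: sum.split)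
lemma norm_stack_sq: "norm (stack a b) ^ 2 = norm a ^ 2 + norm b ^ 2"
  by (simp add: power2_norm_eq_inner inner_stack)
lemma norm_stack_ge1: "norm a \<le> norm (stack a b)"
  by (metis norm_stack_sq le_add_same_cancel1 norm_ge_zero power2_le_imp_le zero_le_power2)
lemma norm_stack_ge2: "norm b \<le> norm (stack a b)"
  by (metis norm_stack_sq le_add_same_cancel2 norm_ge_zero power2_le_imp_le zero_le_power2)
lemma norm_stack_le: "norm (stack a b) \<le> norm a + norm b"
proof -
  have "norm (stack a b) ^ 2 \<le> (norm a + norm b) ^ 2"
    unfolding norm_stack_sq by (simp add: power2_sum)
  thus ?thesis by (rule power2_le_imp_le) simp
qed
lemma bl_stack1: "bounded_linear (\<lambda>a. stack a 0)"
  by (rule linear_conv_bounded_linear[THEN iffD1], rule linearI) (simp_all add: vec_eq_iff stack_def split: sum.split)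
lemma bl_stack2: "bounded_linear (\<lambda>a. stack 0 a)"
  by (rule linear_conv_bounded_linear[THEN iffD1], rule linearI) (simp_all add: vec_eq_iff stack_def split: sum.split)
lemma stack_split: "stack a b = stack a 0 + stack 0 b"
  by (simp add: vec_eq_iff stack_def split: sum.split)
lemma has_integral_stack:
  assumes "(f has_integral i) S" "(g has_integral j) S"
  shows "((\<lambda>s. stack (f s) (g s)) has_integral stack i j) S"
proof -
  have "((\<lambda>s. stack (f s) 0 + stack 0 (g s)) has_integral (stack i 0 + stack 0 j)) S"
    by (intro has_integral_add has_integral_linear[OF assms(1) bl_stack1, unfolded o_def]
         has_integral_linear[OF assms(2) bl_stack2, unfolded o_def])
  thus ?thesis by (simp add: stack_split[symmetric])
qed

lemma event_hold:
  fixes g :: "real \<Rightarrow> 'a::real_normed_vector" and tk :: "nat \<Rightarrow> ereal" and h :: "real \<Rightarrow> 'a"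
  assumes t0: "tk 0 = 0" and tau: "\<tau> > 0"
    and tS: "\<forall>k. tk (Suc k) = Inf {ereal t | t. tk k + ereal \<tau> \<le> ereal t \<and>
          norm (g (real_of_ereal (tk k)) - g t) > \<sigma> * norm (g t) + \<epsilon>}"
    and hold: "\<forall>k t. tk k \<le> ereal t \<and> ereal t < tk (Suc k) \<longrightarrow> h t = g (real_of_ereal (tk k))"
    and q: "q \<ge> 0"
  shows "\<exists>r\<in>{0..q}. h q = g r \<and> (q - r < \<tau> \<or> norm (g r - g q) \<le> \<sigma> * norm (g q) + \<epsilon>)"
proof -
  have step: "tk k + ereal \<tau> \<le> tk (Suc k)" for k
    unfolding tS[rule_format] by (rule Inf_greatest) auto
  have lb: "ereal (real k * \<tau>) \<le> tk k" for k
  proof (induction k)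
    case 0 then show ?case by (simp add: t0)
  next
    case (Suc k)
    have "ereal (real (Suc k) * \<tau>) = ereal (real k * \<tau>) + ereal \<tau>" by (simp add: algebra_simps)
    also have "\<dots> \<le> tk k + ereal \<tau>" using Suc by (rule add_right_mono)
    also have "\<dots> \<le> tk (Suc k)" by (rule step)
    finally show ?case .
  qed
  define N where "N = {k. tk k \<le> ereal q}"
  have "0 \<in> N" using q by (simp add: N_def t0)
  have Nb: "N \<subseteq> {..nat \<lceil>q / \<tau>\<rceil>}"
  proof
    fix k assume "k \<in> N"
    hence "ereal (real k * \<tau>) \<le> ereal q" using lb[of k] unfolding N_def by (meson mem_Collect_eq order_trans)
    hence "real k * \<tau> \<le> q" by simp
    hence "real k \<le> q / \<tau>" using tau by (simp add: field_simps)
    thus "k \<in> {..nat \<lceil>q / \<tau>\<rceil>}" by (simp add: nat_le_iff le_ceiling_iff) linarith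
  qed
  hence fin: "finite N" by (rule finite_subset) simp
  define k where "k = Max N"
  have kN: "k \<in> N" unfolding k_def using fin \<open>0 \<in> N\<close> by (intro Max_in) auto
  have "Suc k \<notin> N"
  proof
    assume "Suc k \<in> N"
    hence "Suc k \<le> k" unfolding k_def using fin by (rule Max_ge[rotated])
    thus False by simp
  qed
  hence lt: "ereal q < tk (Suc k)" by (simp add: N_def)
  have le: "tk k \<le> ereal q" using kN by (simp add: N_def)
  have "0 \<le> real k * \<tau>" using tau by simp
  hence ge0: "0 \<le> tk k" using lb[of k] by (metis order_trans zero_ereal_def ereal_less_eq(3))
  obtain r where r: "tk k = ereal r" using le ge0 by (cases "tk k") auto
  have r0: "0 \<le> r" "r \<le> q" using le ge0 r by auto
  have hq: "h q = g r" using hold[rule_format, of k q] le lt r by simp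
  show ?thesis
  proof (intro bexI[of _ r] conjI)
    show "h q = g r" by fact
    show "r \<in> {0..q}" using r0 by simp
    show "q - r < \<tau> \<or> norm (g r - g q) \<le> \<sigma> * norm (g q) + \<epsilon>"
    proof (rule ccontr)
      assume "\<not> ?thesis"
      hence c: "\<tau> \<le> q - r" "norm (g r - g q) > \<sigma> * norm (g q) + \<epsilon>" by auto
      have "ereal q \<in> {ereal t | t. tk k + ereal \<tau> \<le> ereal t \<and>
          norm (g (real_of_ereal (tk k)) - g t) > \<sigma> * norm (g t) + \<epsilon>}"
        using c r by auto
      hence "tk (Suc k) \<le> ereal q" unfolding tS[rule_format] by (rule Inf_lower)
      thus False using lt by simp
    qed
  qed
qed

lemma cont_nonneg_at0:
  fixes \<phi> :: "real \<Rightarrow> real"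
  assumes "continuous_on {0..s1} \<phi>" "s1 > 0" "\<And>s. 0 < s \<Longrightarrow> s \<le> s1 \<Longrightarrow> 0 \<le> \<phi> s"
  shows "0 \<le> \<phi> 0"
proof -
  have cl: "closed {s \<in> {0..s1}. (\<lambda>_. 0) s \<le> \<phi> s}"
    by (rule continuous_on_closed_Collect_le) (auto intro: assms continuous_on_const)
  have "{0<..s1} \<subseteq> {s \<in> {0..s1}. (\<lambda>_. 0) s \<le> \<phi> s}" using assms(3) by auto
  hence "closure {0<..s1} \<subseteq> {s \<in> {0..s1}. (\<lambda>_. 0) s \<le> \<phi> s}" using cl by (rule closure_minimal)
  hence "{0..s1} \<subseteq> {s \<in> {0..s1}. (\<lambda>_. 0) s \<le> \<phi> s}" using assms(2) by simp
  moreover have "0 \<in> {0..s1}" using assms(2) by simp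
  ultimately show ?thesis by blast
qed

lemma exp_minus_one_le: "(x::real) \<ge> 0 \<Longrightarrow> exp x - 1 \<le> x * exp x"
proof -
  assume "x \<ge> 0"
  have "1 - x \<le> exp (-x)" using exp_ge_add_one_self[of "-x"] by simp
  hence "(1 - x) * exp x \<le> exp (-x) * exp x" by (rule mult_right_mono) simp
  thus ?thesis by (simp add: exp_minus field_simps)
qed

lemma halanay:
  fixes u :: "real \<Rightarrow> real"
  assumes cont: "\<And>T. continuous_on {0..T} u"
    and a: "a \<ge> 0" and lam: "l > 0" and b: "b \<ge> 0" and T: "T \<ge> 0" and s0: "s0 > 0"
    and K: "K \<ge> 0" and D: "D \<ge> 0"
    and coef: "l + b * exp (l * T) \<le> a" and ba: "b < a" and Dc: "c < (a - b) * D"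
    and init: "u 0 \<le> K + D"
    and step: "\<And>t s G. 0 < s \<Longrightarrow> s \<le> s0 \<Longrightarrow> s \<le> t \<Longrightarrow> 0 \<le> G \<Longrightarrow>
        (\<And>q. max 0 (t - s - T) \<le> q \<Longrightarrow> q \<le> t \<Longrightarrow> u q \<le> G) \<Longrightarrow>
        u t - u (t - s) \<le> s * (- a * u (t - s) + b * G + c) + s\<^sup>2 * (q1 * G + q0)"
    and t: "t \<ge> 0"
  shows "u t \<le> K * exp (- l * t) + D"
proof -
  define g where "g t = K * exp (- l * t) + D" for t
  have g_anti: "g t2 \<le> g t1" if "t1 \<le> t2" for t1 t2
    unfolding g_def using that lam K by (auto intro!: mult_left_mono)
  have g_cont: "continuous_on S g" for S unfolding g_def by (intro continuous_intros)
  have g_nonneg: "0 \<le> g t" for t unfolding g_def using K D by simp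
  have main: "u t < g t + \<eta>" if eta: "\<eta> > 0" and t: "t \<ge> 0" for \<eta> t
  proof (rule ccontr)
    assume nt: "\<not> u t < g t + \<eta>"
    define S where "S = {s \<in> {0..t}. (\<lambda>s. g s + \<eta>) s \<le> u s}"
    have clS: "closed S" unfolding S_def
      by (rule continuous_on_closed_Collect_le) (auto intro!: continuous_intros g_cont cont)
    have tS: "t \<in> S" using nt t by (simp add: S_def)
    have bS: "bdd_below S" unfolding S_def by (rule bdd_belowI[of _ 0]) auto
    define ts where "ts = Inf S"
    have tsS: "ts \<in> S" unfolding ts_def using clS tS bS by (intro closed_contains_Inf) auto
    have ts0: "0 \<le> ts" "ts \<le> t" using tsS by (auto simp: S_def)
    have below: "u q < g q + \<eta>" if "0 \<le> q" "q < ts" for q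
    proof (rule ccontr)
      assume "\<not> u q < g q + \<eta>"
      hence "q \<in> S" using that ts0 by (auto simp: S_def)
      hence "ts \<le> q" unfolding ts_def using bS by (rule cInf_lower)
      thus False using that by simp
    qed
    have tspos: "ts > 0"
    proof (rule ccontr)
      assume "\<not> ts > 0" hence "ts = 0" using ts0 by simp
      hence "g 0 + \<eta> \<le> u 0" using tsS by (simp add: S_def)
      thus False using init eta by (simp add: g_def)
    qed
    have ule: "u ts \<le> g ts + \<eta>"
    proof -
      have cl: "closed {s \<in> {0..ts}. u s \<le> (\<lambda>s. g s + \<eta>) s}"
        by (rule continuous_on_closed_Collect_le) (auto intro!: continuous_intros g_cont cont)
      have "{0..<ts} \<subseteq> {s \<in> {0..ts}. u s \<le> (\<lambda>s. g s + \<eta>) s}" using below by (auto intro: less_imp_le)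
      hence "closure {0..<ts} \<subseteq> {s \<in> {0..ts}. u s \<le> (\<lambda>s. g s + \<eta>) s}" using cl by (rule closure_minimal)
      hence "{0..ts} \<subseteq> {s \<in> {0..ts}. u s \<le> (\<lambda>s. g s + \<eta>) s}" using tspos by simp
      thus ?thesis using ts0 by auto
    qed
    have uge: "g ts + \<eta> \<le> u ts" using tsS by (simp add: S_def)
    define s1 where "s1 = min ts s0"
    have s1pos: "s1 > 0" using tspos s0 by (simp add: s1_def)
    define G where "G s = g (ts - s - T) + \<eta>" for s
    define E where "E = exp (- l * ts)"
    have Epos: "E > 0" by (simp add: E_def)
    define \<phi> where "\<phi> s = - a * u (ts - s) + b * G s + c + s * (q1 * G s + q0) + K * l * E * exp (l * s)" for s
    have phi_nn: "0 \<le> \<phi> s" if s: "0 < s" "s \<le> s1" for s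
    proof -
      have s': "s \<le> s0" "s \<le> ts" using s by (auto simp: s1_def)
      have G0: "0 \<le> G s" using g_nonneg eta by (simp add: G_def add_nonneg_pos less_imp_le)
      have win: "u q \<le> G s" if "max 0 (ts - s - T) \<le> q" "q \<le> ts" for q
      proof (cases "q < ts")
        case True
        hence "u q < g q + \<eta>" using below that by simp
        also have "g q \<le> g (ts - s - T)" using that by (intro g_anti) simp
        finally show ?thesis by (simp add: G_def)
      next
        case False
        hence "q = ts" using that by simp
        moreover have "g ts \<le> g (ts - s - T)" using s T by (intro g_anti) simp
        ultimately show ?thesis using ule by (simp add: G_def)
      qed
      have st: "u ts - u (ts - s) \<le> s * (- a * u (ts - s) + b * G s + c) + s\<^sup>2 * (q1 * G s + q0)"
        using step[OF s(1) s'(1) s'(2) G0 win] by blast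
      have ub: "u (ts - s) \<le> g (ts - s) + \<eta>" using below[of "ts - s"] s s'(2) by simp
      have "g ts - g (ts - s) = - K * E * (exp (l * s) - 1)"
        by (simp add: g_def E_def algebra_simps mult_exp_exp)
      also have "\<dots> \<ge> - K * E * (l * s * exp (l * s))"
        using exp_minus_one_le[of "l * s"] lam s K Epos
        by (intro mult_left_mono_neg) (auto intro: mult_nonneg_nonneg)
      finally have "- K * E * (l * s * exp (l * s)) \<le> u ts - u (ts - s)"
        using ub uge by linarith
      with st have "- K * E * (l * s * exp (l * s)) \<le> s * (- a * u (ts - s) + b * G s + c) + s\<^sup>2 * (q1 * G s + q0)"
        by linarith
      hence "s * (- K * E * l * exp (l * s)) \<le> s * (- a * u (ts - s) + b * G s + c + s * (q1 * G s + q0))"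
        by (simp add: power2_eq_square algebra_simps)
      hence "- K * E * l * exp (l * s) \<le> - a * u (ts - s) + b * G s + c + s * (q1 * G s + q0)"
        using mult_le_cancel_left_pos[OF s(1)] by blast
      thus ?thesis by (simp add: \<phi>_def algebra_simps)
    qed
    have phi_cont: "continuous_on {0..s1} \<phi>"
    proof -
      have "continuous_on {0..s1} (u \<circ> (\<lambda>s. ts - s))"
      proof (rule continuous_on_compose)
        show "continuous_on {0..s1} (\<lambda>s. ts - s)" by (intro continuous_intros)
        show "continuous_on ((\<lambda>s. ts - s) ` {0..s1}) u"
          by (rule continuous_on_subset[OF cont[of ts]]) (auto simp: s1_def)
      qed
      thus ?thesis unfolding \<phi>_def G_def o_def g_def by (intro continuous_intros)
    qed
    have "0 \<le> \<phi> 0" by (rule cont_nonneg_at0[OF phi_cont s1pos phi_nn])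
    hence c0: "0 \<le> - a * u ts + b * (g (ts - T) + \<eta>) + c + K * l * E"
      by (simp add: \<phi>_def G_def)
    have gT: "g (ts - T) = K * E * exp (l * T) + D"
      by (simp add: g_def E_def algebra_simps mult_exp_exp)
    have "- a * u ts \<le> - a * (K * E + D + \<eta>)" using mult_left_mono[OF uge a] by (simp add: g_def E_def)
    hence "0 \<le> - a * (K * E + D + \<eta>) + b * (K * E * exp (l * T) + D + \<eta>) + c + K * l * E"
      using c0[unfolded gT] by linarith
    hence "0 \<le> K * E * (l + b * exp (l * T) - a) + (b - a) * (D + \<eta>) + c"
      by (simp add: algebra_simps)
    moreover have "K * E * (l + b * exp (l * T) - a) \<le> 0"
      using coef K Epos by (intro mult_nonneg_nonpos) auto
    moreover have "(b - a) * (D + \<eta>) \<le> (b - a) * D" using ba eta by (simp add: algebra_simps)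
    ultimately show False using Dc by (simp add: algebra_simps)
  qed
  show ?thesis
  proof (rule ccontr)
    assume "\<not> ?thesis"
    hence "u t - g t > 0" by (simp add: g_def)
    from main[OF this t] show False by simp
  qed
qed

definition mn :: "real^'n^'m \<Rightarrow> real" where "mn M = onorm (\<lambda>v. M *v v)"

lemma mn_bound: "norm (M *v v) \<le> mn M * norm v"
  unfolding mn_def by (rule onorm) simp

lemma mn_nonneg: "0 \<le> mn M"
  unfolding mn_def by (rule onorm_pos_le) simp

lemma integral_sub:
  fixes f :: "real \<Rightarrow> 'a::banach"
  assumes I: "\<And>t. t \<ge> 0 \<Longrightarrow> (f has_integral (X t - X 0)) {0..t}"
    and ab: "0 \<le> a" "a \<le> b"
  shows "(f has_integral (X b - X a)) {a..b}"
proof -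
  have ib: "f integrable_on {0..b}" using I[of b] ab by (auto simp: has_integral_integrable)
  have "integral {0..a} f + integral {a..b} f = integral {0..b} f"
    using Henstock_Kurzweil_Integration.integral_combine[OF ab ib] .
  moreover have "integral {0..a} f = X a - X 0" using I[of a] ab by (simp add: integral_unique)
  moreover have "integral {0..b} f = X b - X 0" using I[of b] ab by (simp add: integral_unique)
  ultimately have "integral {a..b} f = X b - X a" by (simp add: algebra_simps)
  moreover have "f integrable_on {a..b}" using ib by (rule integrable_subinterval_real) (use ab in auto)
  ultimately show ?thesis by (metis has_integral_integrable_integral)
qed

lemma integral_diff_bound:
  fixes f :: "real \<Rightarrow> 'a::banach"
  assumes I: "\<And>a b. 0 \<le> a \<Longrightarrow> a \<le> b \<Longrightarrow> (f has_integral (X b - X a)) {a..b}"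
    and M: "M \<ge> 0" and bnd: "\<And>r. lo \<le> r \<Longrightarrow> r \<le> hi \<Longrightarrow> norm (f r) \<le> M"
    and r1: "0 \<le> lo" "lo \<le> r1" "r1 \<le> hi" and r2: "lo \<le> r2" "r2 \<le> hi"
  shows "norm (X r1 - X r2) \<le> \<bar>r1 - r2\<bar> * M"
proof (cases "r1 \<le> r2")
  case True
  have "norm (X r2 - X r1) \<le> M * (r2 - r1)"
    using has_integral_bound_real[of M "{}" f "X r2 - X r1" r1 r2] M I[of r1 r2] True r1 r2 bnd by auto
  thus ?thesis using True by (simp add: norm_minus_commute algebra_simps)
next
  case False
  have "norm (X r1 - X r2) \<le> M * (r1 - r2)"
    using has_integral_bound_real[of M "{}" f "X r1 - X r2" r2 r1] M I[of r2 r1] False r1 r2 bnd by auto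
  thus ?thesis using False by (simp add: algebra_simps)
qed

lemma posdef_lower:
  fixes P :: "real^'n^'n"
  assumes "\<forall>z. z \<noteq> 0 \<longrightarrow> z \<bullet> (P *v z) > 0"
  shows "\<exists>l1>0. \<forall>z. l1 * norm z ^ 2 \<le> z \<bullet> (P *v z)"
proof -
  have cont: "continuous_on (sphere 0 1) (\<lambda>z::real^'n. z \<bullet> (P *v z))"
    by (intro continuous_intros linear_continuous_on) simp
  obtain z0 where z0: "z0 \<in> sphere 0 1" "\<And>z. z \<in> sphere 0 1 \<Longrightarrow> z0 \<bullet> (P *v z0) \<le> z \<bullet> (P *v z)"
    using continuous_attains_inf[OF compact_sphere _ cont] by auto
  have "z0 \<noteq> 0" using z0(1) by auto
  hence pos: "z0 \<bullet> (P *v z0) > 0" using assms by auto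
  show ?thesis
  proof (intro exI[of _ "z0 \<bullet> (P *v z0)"] conjI allI pos)
    fix z :: "real^'n"
    show "z0 \<bullet> (P *v z0) * norm z ^ 2 \<le> z \<bullet> (P *v z)"
    proof (cases "z = 0")
      case True then show ?thesis by simp
    next
      case False
      define v where "v = (1 / norm z) *\<^sub>R z"
      have v: "v \<in> sphere 0 1" using False by (simp add: v_def)
      have zv: "z = norm z *\<^sub>R v" using False by (simp add: v_def)
      have "z \<bullet> (P *v z) = norm z ^ 2 * (v \<bullet> (P *v v))"
        by (subst (1 2) zv) (simp add: matrix_vector_mult_scaleR power2_eq_square)
      thus ?thesis using z0(2)[OF v] by (metis mult.commute mult_right_mono zero_le_power2)
    qed
  qed
qed

lemma mv_le: "mn M \<le> c \<Longrightarrow> norm (M *v v) \<le> c * norm v"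
  by (meson mn_bound mult_right_mono norm_ge_zero order_trans)

locale plant =
  fixes A :: "real^'x^'x" and B :: "real^'u^'x" and C :: "real^'x^'y" and Cq :: "real^'x^'q"
    and E :: "real^'p^'x" and Ew :: "real^'w^'x" and p :: "real^'q \<Rightarrow> real^'p"
    and K1 :: "real^'x^'u" and K2 :: "real^'p^'u" and L1 :: "real^'y^'q" and L2 :: "real^'y^'x"
    and P :: "real^('x + 'x)^('x + 'x)" and \<alpha>0 Lp :: real
  assumes p0: "p 0 = 0" and lip: "Lp-lipschitz_on UNIV p"
    and nominal: "\<forall>x xh.
      let u = K1 *v xh + K2 *v p (Cq *v xh);
          dx = A *v x + B *v u + E *v p (Cq *v x);
          dxh = A *v xh + B *v u + E *v p (Cq *v xh + L1 *v (C *v xh - C *v x))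
                + L2 *v (C *v xh - C *v x);
          z = stack x (x - xh);
          dz = stack dx (dx - dxh)
      in dz \<bullet> (P *v z) + z \<bullet> (P *v dz) \<le> - \<alpha>0 * (z \<bullet> (P *v z))"
begin

definition "k = 1 + mn A + mn B + mn C + mn Cq + mn E + mn Ew + mn K1 + mn K2 + mn L1 + mn L2 + Lp"
definition "kf = 6 * k ^ 4"
definition "kP = mn P + 1"
definition "ctrl xs = K1 *v xs + K2 *v p (Cq *v xs)"
definition "fX x xs wv = A *v x + B *v ctrl xs + E *v p (Cq *v x) + Ew *v wv"
definition "fH x xh xs yv = A *v xh + B *v ctrl xs + E *v p (Cq *v xh + L1 *v (C *v xh - yv))
                + L2 *v (C *v xh - yv)"
definition "fZ x xh xs yv wv = stack (fX x xs wv) (fX x xs wv - fH x xh xs yv)"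
definition "Bil a b = a \<bullet> (P *v b)"
definition "V z = Bil z z"

lemma Lp_nonneg: "0 \<le> Lp" using lip lipschitz_on_nonneg by blast

lemma k_ge1: "1 \<le> k" unfolding k_def using Lp_nonneg by (simp add: mn_nonneg add_nonneg_nonneg)

lemma mnA: "mn A \<le> k" and mnB: "mn B \<le> k" and mnC: "mn C \<le> k" and mnCq: "mn Cq \<le> k"
  and mnE: "mn E \<le> k" and mnEw: "mn Ew \<le> k" and mnK1: "mn K1 \<le> k" and mnK2: "mn K2 \<le> k"
  and mnL1: "mn L1 \<le> k" and mnL2: "mn L2 \<le> k" and Lpk: "Lp \<le> k"
  unfolding k_def using Lp_nonneg mn_nonneg[of A] mn_nonneg[of B] mn_nonneg[of C] mn_nonneg[of Cq]
    mn_nonneg[of E] mn_nonneg[of Ew] mn_nonneg[of K1] mn_nonneg[of K2] mn_nonneg[of L1] mn_nonneg[of L2]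
  by linarith+

lemma kpow: "k \<le> k ^ 4" "k ^ 2 \<le> k ^ 4" "k ^ 3 \<le> k ^ 4" "1 \<le> k ^ 4" "0 \<le> k" "k \<le> k ^ 3" "k \<le> k ^ 2" "k ^ 2 \<le> k ^ 3"
  using k_ge1 by (auto intro: power_increasing[where n=1, simplified] power_increasing one_le_power)

lemma p_lip: "norm (p v - p v') \<le> k * norm (v - v')"
proof -
  have "norm (p v - p v') \<le> Lp * norm (v - v')"
    using lipschitz_onD[OF lip, of v v'] by (simp add: dist_norm)
  also have "\<dots> \<le> k * norm (v - v')" using Lpk by (simp add: mult_right_mono)
  finally show ?thesis .
qed

lemma p_bound: "norm (p v) \<le> k * norm v"
  using p_lip[of v 0] by (simp add: p0)

lemma ctrl_lip: "norm (ctrl a - ctrl b) \<le> 2 * k ^ 3 * norm (a - b)"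
proof -
  have "ctrl a - ctrl b = K1 *v (a - b) + K2 *v (p (Cq *v a) - p (Cq *v b))"
    by (simp add: ctrl_def matrix_vector_mult_diff_distrib algebra_simps)
  hence "norm (ctrl a - ctrl b) \<le> norm (K1 *v (a - b)) + norm (K2 *v (p (Cq *v a) - p (Cq *v b)))"
    by (simp add: norm_triangle_ineq)
  also have "norm (K1 *v (a - b)) \<le> k * norm (a - b)" by (rule mv_le[OF mnK1])
  also have "norm (K2 *v (p (Cq *v a) - p (Cq *v b))) \<le> k * (k * (k * norm (a - b)))"
  proof -
    have "norm (K2 *v (p (Cq *v a) - p (Cq *v b))) \<le> k * norm (p (Cq *v a) - p (Cq *v b))" by (rule mv_le[OF mnK2])
    also have "norm (p (Cq *v a) - p (Cq *v b)) \<le> k * norm (Cq *v a - Cq *v b)" by (rule p_lip)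
    also have "norm (Cq *v a - Cq *v b) \<le> k * norm (a - b)"
      using mv_le[OF mnCq, of "a - b"] by (simp add: matrix_vector_mult_diff_distrib)
    finally show ?thesis using kpow by (simp add: mult_left_mono)
  qed
  finally have "norm (ctrl a - ctrl b) \<le> k * norm (a - b) + k ^ 3 * norm (a - b)"
    by (simp add: power3_eq_cube mult.assoc)
  also have "\<dots> \<le> 2 * k ^ 3 * norm (a - b)"
    using mult_right_mono[OF kpow(6) norm_ge_zero[of "a - b"]] by (simp add: mult.commute)
  finally show ?thesis .
qed


lemma mvk: "norm (A *v v) \<le> k * norm v" "norm (B *v v1) \<le> k * norm v1" "norm (C *v v) \<le> k * norm v"
  "norm (Cq *v v) \<le> k * norm v" "norm (E *v v2) \<le> k * norm v2" "norm (Ew *v v3) \<le> k * norm v3"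
  "norm (L1 *v v4) \<le> k * norm v4" "norm (L2 *v v4) \<le> k * norm v4"
  by (intro mv_le mnA mnB mnC mnCq mnE mnEw mnL1 mnL2)+

lemma k4mono: "k * norm v \<le> k ^ 4 * norm v" "k^2 * norm v \<le> k ^ 4 * norm v" "k^3 * norm v \<le> k ^ 4 * norm v"
  by (intro mult_right_mono kpow norm_ge_zero)+

lemma ctrl_bound: "norm (ctrl xs) \<le> 2 * k ^ 3 * norm xs"
  using ctrl_lip[of xs 0] by (simp add: ctrl_def p0)

lemma fX_bound: "norm (fX x xs wv) \<le> kf * (norm x + norm xs + norm wv)"
proof -
  have "norm (fX x xs wv) \<le> norm (A *v x) + norm (B *v ctrl xs) + norm (E *v p (Cq *v x)) + norm (Ew *v wv)"
    unfolding fX_def by (intro norm_triangle_le add_mono order_refl)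
  also have "norm (A *v x) \<le> k ^ 4 * norm x" using mvk(1) k4mono(1) by (rule order_trans)
  also have "norm (B *v ctrl xs) \<le> 2 * k ^ 4 * norm xs"
  proof -
    have "norm (B *v ctrl xs) \<le> k * norm (ctrl xs)" by (rule mvk)
    also have "\<dots> \<le> k * (2 * k ^ 3 * norm xs)" using ctrl_bound kpow(5) by (rule mult_left_mono)
    finally show ?thesis by (simp add: power_numeral_reduce)
  qed
  also have "norm (E *v p (Cq *v x)) \<le> k ^ 4 * norm x"
  proof -
    have "norm (E *v p (Cq *v x)) \<le> k * norm (p (Cq *v x))" by (rule mvk)
    also have "\<dots> \<le> k * (k * norm (Cq *v x))" using p_bound kpow(5) by (rule mult_left_mono)
    also have "\<dots> \<le> k * (k * (k * norm x))" using mvk(4) kpow(5) by (intro mult_left_mono) auto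
    also have "\<dots> = k ^ 3 * norm x" by (simp add: power3_eq_cube)
    also have "\<dots> \<le> k ^ 4 * norm x" by (rule k4mono)
    finally show ?thesis .
  qed
  also have "norm (Ew *v wv) \<le> k ^ 4 * norm wv" using mvk(6) k4mono(1) by (rule order_trans)
  finally have "norm (fX x xs wv) \<le> k ^ 4 * (2 * norm x + 2 * norm xs + norm wv)" by (simp add: algebra_simps)
  also have "\<dots> \<le> kf * (norm x + norm xs + norm wv)" unfolding kf_def using kpow by (simp add: algebra_simps)
  finally show ?thesis .
qed

lemma fH_bound: "norm (fH x xh xs yv) \<le> kf * (norm xh + norm xs + norm yv)"
proof -
  have cy: "norm (C *v xh - yv) \<le> k * norm xh + norm yv"
    using norm_triangle_ineq4[of "C *v xh" yv] mvk(3)[of xh] by linarith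
  have "norm (fH x xh xs yv) \<le> norm (A *v xh) + norm (B *v ctrl xs) + norm (E *v p (Cq *v xh + L1 *v (C *v xh - yv)))
      + norm (L2 *v (C *v xh - yv))"
    unfolding fH_def by (intro norm_triangle_le add_mono order_refl)
  also have "norm (A *v xh) \<le> k ^ 4 * norm xh" using mvk(1) k4mono(1) by (rule order_trans)
  also have "norm (B *v ctrl xs) \<le> 2 * k ^ 4 * norm xs"
  proof -
    have "norm (B *v ctrl xs) \<le> k * norm (ctrl xs)" by (rule mvk)
    also have "\<dots> \<le> k * (2 * k ^ 3 * norm xs)" using ctrl_bound kpow(5) by (rule mult_left_mono)
    finally show ?thesis by (simp add: power_numeral_reduce)
  qed
  also have "norm (E *v p (Cq *v xh + L1 *v (C *v xh - yv))) \<le> 2 * k ^ 4 * norm xh + k ^ 4 * norm yv"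
  proof -
    have "norm (E *v p (Cq *v xh + L1 *v (C *v xh - yv))) \<le> k * norm (p (Cq *v xh + L1 *v (C *v xh - yv)))" by (rule mvk)
    also have "\<dots> \<le> k * (k * norm (Cq *v xh + L1 *v (C *v xh - yv)))" using p_bound kpow(5) by (rule mult_left_mono)
    also have "norm (Cq *v xh + L1 *v (C *v xh - yv)) \<le> k * norm xh + k * (k * norm xh + norm yv)"
    proof -
      have "norm (Cq *v xh + L1 *v (C *v xh - yv)) \<le> norm (Cq *v xh) + norm (L1 *v (C *v xh - yv))"
        by (rule norm_triangle_ineq)
      also have "norm (L1 *v (C *v xh - yv)) \<le> k * (k * norm xh + norm yv)"
        using mvk(7)[of "C *v xh - yv"] mult_left_mono[OF cy kpow(5)] by linarith
      finally show ?thesis using mvk(4)[of xh] by linarith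
    qed
    hence "k * (k * norm (Cq *v xh + L1 *v (C *v xh - yv))) \<le> k * (k * (k * norm xh + k * (k * norm xh + norm yv)))"
      using kpow(5) by (intro mult_left_mono) auto
    also have "\<dots> = k^3 * norm xh + k^4 * norm xh + k^3 * norm yv" by (simp add: algebra_simps power_numeral_reduce)
    also have "\<dots> \<le> 2 * k ^ 4 * norm xh + k ^ 4 * norm yv" using k4mono(3)[of xh] k4mono(3)[of yv] by linarith
    finally show ?thesis .
  qed
  also have "norm (L2 *v (C *v xh - yv)) \<le> k ^ 4 * norm xh + k ^ 4 * norm yv"
  proof -
    have "norm (L2 *v (C *v xh - yv)) \<le> k * (k * norm xh + norm yv)"
      using mvk(8)[of "C *v xh - yv"] mult_left_mono[OF cy kpow(5)] by linarith
    also have "\<dots> = k^2 * norm xh + k * norm yv" by (simp add: algebra_simps power2_eq_square)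
    also have "\<dots> \<le> k ^ 4 * norm xh + k ^ 4 * norm yv" using k4mono(2)[of xh] k4mono(1)[of yv] by linarith
    finally show ?thesis .
  qed
  finally have "norm (fH x xh xs yv) \<le> k ^ 4 * (4 * norm xh + 2 * norm xs + 2 * norm yv)" by (simp add: algebra_simps)
  also have "\<dots> \<le> kf * (norm xh + norm xs + norm yv)" unfolding kf_def using kpow by (simp add: algebra_simps)
  finally show ?thesis .
qed

lemma fZ_bound: "norm (fZ x xh xs yv wv) \<le> 3 * kf * (norm x + norm xh + norm xs + norm yv + norm wv)"
proof -
  have "norm (fZ x xh xs yv wv) \<le> norm (fX x xs wv) + norm (fX x xs wv - fH x xh xs yv)"
    unfolding fZ_def by (rule norm_stack_le)
  also have "\<dots> \<le> 2 * norm (fX x xs wv) + norm (fH x xh xs yv)"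
    using norm_triangle_ineq4[of "fX x xs wv" "fH x xh xs yv"] by linarith
  also have "\<dots> \<le> 2 * (kf * (norm x + norm xs + norm wv)) + kf * (norm xh + norm xs + norm yv)"
    using fX_bound fH_bound by (intro add_mono) auto
  also have "\<dots> \<le> 3 * kf * (norm x + norm xh + norm xs + norm yv + norm wv)"
    using kpow unfolding kf_def by (simp add: algebra_simps)
  finally show ?thesis .
qed

lemma pert: "norm (fZ x xh xs yv wv - fZ x xh xh (C *v x) 0) \<le> kf * (norm (xs - xh) + norm (yv - C *v x) + norm wv)"
proof -
  define d1 where "d1 = fX x xs wv - fX x xh 0"
  define d2 where "d2 = fH x xh xs yv - fH x xh xh (C *v x)"
  have eq: "fZ x xh xs yv wv - fZ x xh xh (C *v x) 0 = stack d1 (d1 - d2)"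
    unfolding fZ_def d1_def d2_def stack_diff[symmetric] by (simp add: algebra_simps)
  have bc: "norm (B *v (ctrl xs - ctrl xh)) \<le> 2 * k ^ 4 * norm (xs - xh)"
  proof -
    have "norm (B *v (ctrl xs - ctrl xh)) \<le> k * norm (ctrl xs - ctrl xh)" by (rule mvk)
    also have "\<dots> \<le> k * (2 * k ^ 3 * norm (xs - xh))" using ctrl_lip kpow(5) by (rule mult_left_mono)
    finally show ?thesis by (simp add: power_numeral_reduce)
  qed
  have d1e: "d1 = B *v (ctrl xs - ctrl xh) + Ew *v wv"
    unfolding d1_def fX_def by (simp add: matrix_vector_mult_diff_distrib algebra_simps)
  have nd1: "norm d1 \<le> 2 * k ^ 4 * norm (xs - xh) + k ^ 4 * norm wv"
    unfolding d1e using norm_triangle_ineq[of "B *v (ctrl xs - ctrl xh)" "Ew *v wv"] bc mvk(6)[of wv] k4mono(1)[of wv]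
    by linarith
  have d2e: "d2 = B *v (ctrl xs - ctrl xh) + E *v (p (Cq *v xh + L1 *v (C *v xh - yv)) - p (Cq *v xh + L1 *v (C *v xh - C *v x)))
     + L2 *v (C *v x - yv)"
    unfolding d2_def fH_def by (simp add: matrix_vector_mult_diff_distrib algebra_simps)
  have ep: "norm (E *v (p (Cq *v xh + L1 *v (C *v xh - yv)) - p (Cq *v xh + L1 *v (C *v xh - C *v x)))) \<le> k ^ 4 * norm (yv - C *v x)"
  proof -
    have "norm (E *v (p (Cq *v xh + L1 *v (C *v xh - yv)) - p (Cq *v xh + L1 *v (C *v xh - C *v x))))
        \<le> k * norm (p (Cq *v xh + L1 *v (C *v xh - yv)) - p (Cq *v xh + L1 *v (C *v xh - C *v x)))" by (rule mvk)
    also have "\<dots> \<le> k * (k * norm ((Cq *v xh + L1 *v (C *v xh - yv)) - (Cq *v xh + L1 *v (C *v xh - C *v x))))"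
      using p_lip kpow(5) by (rule mult_left_mono)
    also have "(Cq *v xh + L1 *v (C *v xh - yv)) - (Cq *v xh + L1 *v (C *v xh - C *v x)) = L1 *v (C *v x - yv)"
      by (simp add: matrix_vector_mult_diff_distrib algebra_simps)
    also have "k * (k * norm (L1 *v (C *v x - yv))) \<le> k * (k * (k * norm (C *v x - yv)))"
      using mvk(7) kpow(5) by (intro mult_left_mono) auto
    also have "\<dots> = k ^ 3 * norm (yv - C *v x)" by (simp add: power3_eq_cube norm_minus_commute)
    also have "\<dots> \<le> k ^ 4 * norm (yv - C *v x)" by (rule k4mono)
    finally show ?thesis .
  qed
  have l2: "norm (L2 *v (C *v x - yv)) \<le> k ^ 4 * norm (yv - C *v x)"
    using mvk(8)[of "C *v x - yv"] k4mono(1)[of "yv - C *v x"] by (simp add: norm_minus_commute)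
  have nd2: "norm d2 \<le> 2 * k ^ 4 * norm (xs - xh) + 2 * k ^ 4 * norm (yv - C *v x)"
  proof -
    have "norm d2 \<le> norm (B *v (ctrl xs - ctrl xh)) + norm (E *v (p (Cq *v xh + L1 *v (C *v xh - yv)) - p (Cq *v xh + L1 *v (C *v xh - C *v x))))
     + norm (L2 *v (C *v x - yv))"
      unfolding d2e by (intro norm_triangle_le add_mono order_refl)
    thus ?thesis using bc ep l2 by linarith
  qed
  have "norm (stack d1 (d1 - d2)) \<le> norm d1 + norm (d1 - d2)" by (rule norm_stack_le)
  also have "\<dots> \<le> 2 * norm d1 + norm d2" using norm_triangle_ineq4[of d1 d2] by linarith
  also have "\<dots> \<le> k ^ 4 * (6 * norm (xs - xh) + 2 * norm (yv - C *v x) + 2 * norm wv)"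
    using nd1 nd2 by (simp add: algebra_simps)
  also have "\<dots> \<le> kf * (norm (xs - xh) + norm (yv - C *v x) + norm wv)"
    unfolding kf_def using kpow by (simp add: algebra_simps)
  finally show ?thesis using eq by simp
qed

lemma nom: "Bil (fZ x xh xh (C *v x) 0) (stack x (x - xh)) + Bil (stack x (x - xh)) (fZ x xh xh (C *v x) 0)
    \<le> - \<alpha>0 * V (stack x (x - xh))"
  using spec[OF spec[OF nominal, of x], of xh]
  unfolding Let_def Bil_def V_def fZ_def fX_def fH_def ctrl_def by simp

lemma kP_pos: "0 < kP" unfolding kP_def using mn_nonneg[of P] by simp

lemma Bil_bound: "\<bar>Bil a b\<bar> \<le> kP * norm a * norm b"
proof -
  have "\<bar>Bil a b\<bar> \<le> norm a * norm (P *v b)" unfolding Bil_def by (rule Cauchy_Schwarz_ineq2)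
  also have "\<dots> \<le> norm a * (kP * norm b)"
    using mv_le[of P kP b] by (intro mult_left_mono) (auto simp: kP_def)
  finally show ?thesis by (simp add: algebra_simps)
qed

lemma Bil_add1: "Bil (a + b) c = Bil a c + Bil b c" unfolding Bil_def by (simp add: inner_add_left)
lemma Bil_add2: "Bil c (a + b) = Bil c a + Bil c b" unfolding Bil_def by (simp add: matrix_vector_right_distrib inner_add_right)
lemma Bil_diff1: "Bil (a - b) c = Bil a c - Bil b c" unfolding Bil_def by (simp add: inner_diff_left)
lemma Bil_diff2: "Bil c (a - b) = Bil c a - Bil c b" unfolding Bil_def by (simp add: matrix_vector_mult_diff_distrib inner_diff_right)

lemma V_expand: "V (z + d) = V z + Bil d z + Bil z d + V d"
  unfolding V_def by (simp add: Bil_add1 Bil_add2)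

lemma V_diff_bound: "\<bar>V a - V b\<bar> \<le> kP * norm (a - b) * (norm a + norm b)"
proof -
  have "V a - V b = Bil (a - b) a + Bil b (a - b)" unfolding V_def by (simp add: Bil_diff1 Bil_diff2)
  hence "\<bar>V a - V b\<bar> \<le> \<bar>Bil (a - b) a\<bar> + \<bar>Bil b (a - b)\<bar>" by simp
  also have "\<dots> \<le> kP * norm (a - b) * norm a + kP * norm b * norm (a - b)" by (intro add_mono Bil_bound)
  finally show ?thesis by (simp add: algebra_simps)
qed

lemma V_le: "V a \<le> kP * norm a ^ 2"
  using Bil_bound[of a a] unfolding V_def by (simp add: power2_eq_square)

lemma bl_L: "bounded_linear (\<lambda>v. Bil v z1 + Bil z1 v)"
  by (rule linear_conv_bounded_linear[THEN iffD1], rule linearI)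
     (simp_all add: Bil_def inner_add_left inner_add_right matrix_vector_right_distrib matrix_vector_mult_scaleR algebra_simps)

end

context plant begin

lemma step:
  fixes x xh xhs :: "real \<Rightarrow> real^'x" and ys :: "real \<Rightarrow> real^'y" and w :: "real \<Rightarrow> real^'w"
  defines "Z \<equiv> \<lambda>r. stack (x r) (x r - xh r)"
  defines "F \<equiv> \<lambda>r. fZ (x r) (xh r) (xhs r) (ys r) (w r)"
  assumes Iz: "\<And>a b. 0 \<le> a \<Longrightarrow> a \<le> b \<Longrightarrow> (F has_integral (Z b - Z a)) {a..b}"
    and EVu: "\<And>q. q \<ge> 0 \<Longrightarrow> \<exists>r\<in>{0..q}. xhs q = xh r \<and> (q - r < \<tau> \<or> norm (xh r - xh q) \<le> \<sigma> * norm (xh q) + \<epsilon>)"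
    and EVy: "\<And>q. q \<ge> 0 \<Longrightarrow> \<exists>r\<in>{0..q}. ys q = C *v x r \<and> (q - r < \<tau> \<or> norm (C *v x r - C *v x q) \<le> \<sigma> * norm (C *v x q) + \<epsilon>)"
    and W: "\<And>r. r \<ge> 0 \<Longrightarrow> norm (w r) \<le> \<omega>0"
    and par: "0 < \<tau>" "0 \<le> \<sigma>" "\<sigma> \<le> 1" "0 \<le> \<epsilon>" "0 \<le> \<omega>0" "0 \<le> \<alpha>0"
    and s: "0 < s" "s \<le> t" and R: "0 \<le> R"
    and win: "\<And>q. max 0 (t - s - 2 * \<tau>) \<le> q \<Longrightarrow> q \<le> t \<Longrightarrow> norm (Z q) \<le> R"
    and MF: "3 * kf * (R + 2 * R + (4 * R + \<epsilon>) + ((1 + \<sigma>) * k * R + \<epsilon>) + \<omega>0) \<le> MF"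
    and Bp: "kf * ((2 * \<tau> * MF + 2 * \<sigma> * R + \<epsilon>) + (k * \<tau> * MF + \<sigma> * k * R + \<epsilon>) + \<omega>0) \<le> Bp"
  shows "V (Z t) - V (Z (t - s)) \<le> s * (- \<alpha>0 * V (Z (t - s)) + 2 * kP * R * Bp)
            + s\<^sup>2 * (3 * kP * MF\<^sup>2 + 2 * \<alpha>0 * kP * MF * R)"
proof -
  have kf0: "0 \<le> kf" unfolding kf_def using kpow by simp
  have xb: "norm (x q) \<le> R" "norm (xh q) \<le> 2 * R" "norm (x q - xh q) \<le> R"
    if "max 0 (t - s - 2 * \<tau>) \<le> q" "q \<le> t" for q
  proof -
    have z: "norm (Z q) \<le> R" using win that by blast
    show 1: "norm (x q) \<le> R" using z norm_stack_ge1 unfolding Z_def by (rule order_trans[rotated])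
    show 2: "norm (x q - xh q) \<le> R" using z norm_stack_ge2 unfolding Z_def by (rule order_trans[rotated])
    have "norm (xh q) \<le> norm (x q) + norm (x q - xh q)" using norm_triangle_ineq4[of "x q" "x q - xh q"] by simp
    thus "norm (xh q) \<le> 2 * R" using 1 2 by linarith
  qed
  have xsb: "norm (xhs q) \<le> 4 * R + \<epsilon>" if q: "max 0 (t - s - \<tau>) \<le> q" "q \<le> t" for q
  proof -
    obtain r where r: "r \<in> {0..q}" "xhs q = xh r" "q - r < \<tau> \<or> norm (xh r - xh q) \<le> \<sigma> * norm (xh q) + \<epsilon>"
      using EVu[of q] q by auto
    from r(3) show ?thesis
    proof
      assume "q - r < \<tau>"
      hence "max 0 (t - s - 2 * \<tau>) \<le> r" "r \<le> t" using r(1) q by auto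
      hence "norm (xh r) \<le> 2 * R" by (rule xb)
      thus ?thesis using r(2) R par by simp
    next
      assume a: "norm (xh r - xh q) \<le> \<sigma> * norm (xh q) + \<epsilon>"
      have hq: "norm (xh q) \<le> 2 * R" using q par by (intro xb) auto
      have "\<sigma> * norm (xh q) \<le> 1 * (2 * R)" using par hq by (intro mult_mono) auto
      moreover have "norm (xh r) \<le> norm (xh q) + norm (xh r - xh q)" using norm_triangle_ineq2[of "xh r" "xh q"] by simp
      ultimately show ?thesis using a hq r(2) by simp
    qed
  qed
  have ysb: "norm (ys q) \<le> (1 + \<sigma>) * k * R + \<epsilon>" if q: "max 0 (t - s - \<tau>) \<le> q" "q \<le> t" for q
  proof -
    obtain r where r: "r \<in> {0..q}" "ys q = C *v x r" "q - r < \<tau> \<or> norm (C *v x r - C *v x q) \<le> \<sigma> * norm (C *v x q) + \<epsilon>"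
      using EVy[of q] q by auto
    have kR: "0 \<le> k * R" using kpow R by simp
    from r(3) show ?thesis
    proof
      assume "q - r < \<tau>"
      hence "max 0 (t - s - 2 * \<tau>) \<le> r" "r \<le> t" using r(1) q by auto
      hence "norm (x r) \<le> R" by (rule xb)
      hence "norm (C *v x r) \<le> k * R" using mvk(3)[of "x r"] kpow by (meson mult_left_mono order_trans)
      moreover have "0 \<le> \<sigma> * (k * R)" using par kR by simp
      ultimately show ?thesis using r(2) par by (simp add: algebra_simps)
    next
      assume a: "norm (C *v x r - C *v x q) \<le> \<sigma> * norm (C *v x q) + \<epsilon>"
      have "norm (x q) \<le> R" using q par by (intro xb) auto
      hence cq: "norm (C *v x q) \<le> k * R" using mvk(3)[of "x q"] kpow by (meson mult_left_mono order_trans)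
      have "norm (C *v x r) \<le> norm (C *v x q) + norm (C *v x r - C *v x q)"
        using norm_triangle_ineq2[of "C *v x r" "C *v x q"] by simp
      also have "\<dots> \<le> (1 + \<sigma>) * norm (C *v x q) + \<epsilon>" using a by (simp add: algebra_simps)
      also have "\<dots> \<le> (1 + \<sigma>) * (k * R) + \<epsilon>" using cq par by (simp add: mult_left_mono)
      finally show ?thesis using r(2) by (simp add: mult.assoc)
    qed
  qed
  have Fb: "norm (F q) \<le> MF" if q: "max 0 (t - s - \<tau>) \<le> q" "q \<le> t" for q
  proof -
    have q2: "max 0 (t - s - 2 * \<tau>) \<le> q" using q par by auto
    have "norm (F q) \<le> 3 * kf * (norm (x q) + norm (xh q) + norm (xhs q) + norm (ys q) + norm (w q))"
      unfolding F_def by (rule fZ_bound)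
    also have "\<dots> \<le> 3 * kf * (R + 2 * R + (4 * R + \<epsilon>) + ((1 + \<sigma>) * k * R + \<epsilon>) + \<omega>0)"
      using xb[OF q2 q(2)] xsb[OF q] ysb[OF q] W[of q] q kf0
      by (intro mult_left_mono add_mono) auto
    finally show ?thesis using MF by simp
  qed
  have "max 0 (t - s - \<tau>) \<le> t" using s par by auto
  hence MF0: "0 \<le> MF" using Fb[of t] norm_ge_zero order_trans by blast
  define lo where "lo = max 0 (t - s - \<tau>)"
  have Zd: "norm (Z r1 - Z r2) \<le> \<bar>r1 - r2\<bar> * MF" if "lo \<le> r1" "r1 \<le> t" "lo \<le> r2" "r2 \<le> t" for r1 r2
    by (rule integral_diff_bound[where f=F and lo=lo and hi=t, OF Iz MF0]) (use that Fb in \<open>auto simp: lo_def\<close>)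
  have xdiff: "norm (x r1 - x r2) \<le> norm (Z r1 - Z r2)" "norm (xh r1 - xh r2) \<le> 2 * norm (Z r1 - Z r2)" for r1 r2
  proof -
    have e: "Z r1 - Z r2 = stack (x r1 - x r2) ((x r1 - xh r1) - (x r2 - xh r2))" unfolding Z_def stack_diff ..
    show "norm (x r1 - x r2) \<le> norm (Z r1 - Z r2)" unfolding e by (rule norm_stack_ge1)
    have "norm ((x r1 - xh r1) - (x r2 - xh r2)) \<le> norm (Z r1 - Z r2)" unfolding e by (rule norm_stack_ge2)
    moreover have "xh r1 - xh r2 = (x r1 - x r2) - ((x r1 - xh r1) - (x r2 - xh r2))" by (simp add: algebra_simps)
    hence "norm (xh r1 - xh r2) \<le> norm (x r1 - x r2) + norm ((x r1 - xh r1) - (x r2 - xh r2))"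
      by (metis norm_triangle_ineq4)
    ultimately show "norm (xh r1 - xh r2) \<le> 2 * norm (Z r1 - Z r2)"
      using \<open>norm (x r1 - x r2) \<le> norm (Z r1 - Z r2)\<close> by linarith
  qed
  have eub: "norm (xhs r - xh r) \<le> 2 * \<tau> * MF + 2 * \<sigma> * R + \<epsilon>" if r: "t - s \<le> r" "r \<le> t" for r
  proof -
    obtain r' where r': "r' \<in> {0..r}" "xhs r = xh r'" "r - r' < \<tau> \<or> norm (xh r' - xh r) \<le> \<sigma> * norm (xh r) + \<epsilon>"
      using EVu[of r] r s by auto
    have t1: "0 \<le> 2 * \<tau> * MF" using par MF0 by simp
    have t2: "0 \<le> 2 * \<sigma> * R" using par R by simp
    from r'(3) show ?thesis
    proof
      assume a: "r - r' < \<tau>"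
      have "norm (xh r' - xh r) \<le> 2 * norm (Z r' - Z r)" by (rule xdiff)
      also have "norm (Z r' - Z r) \<le> \<bar>r' - r\<bar> * MF" using a r r'(1) s by (intro Zd) (auto simp: lo_def)
      also have "\<bar>r' - r\<bar> * MF \<le> \<tau> * MF" using a r'(1) MF0 by (intro mult_right_mono) auto
      finally have "norm (xh r' - xh r) \<le> 2 * \<tau> * MF" by (simp add: mult.assoc)
      thus ?thesis unfolding r'(2) using t2 par(4) by linarith
    next
      assume a: "norm (xh r' - xh r) \<le> \<sigma> * norm (xh r) + \<epsilon>"
      have "norm (xh r) \<le> 2 * R" using r s par by (intro xb) auto
      hence "\<sigma> * norm (xh r) \<le> \<sigma> * (2 * R)" using par by (simp add: mult_left_mono)
      hence "\<sigma> * norm (xh r) \<le> 2 * \<sigma> * R" by (simp add: algebra_simps)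
      thus ?thesis unfolding r'(2) using a t1 by linarith
    qed
  qed
  have eyb: "norm (ys r - C *v x r) \<le> k * \<tau> * MF + \<sigma> * k * R + \<epsilon>" if r: "t - s \<le> r" "r \<le> t" for r
  proof -
    obtain r' where r': "r' \<in> {0..r}" "ys r = C *v x r'" "r - r' < \<tau> \<or> norm (C *v x r' - C *v x r) \<le> \<sigma> * norm (C *v x r) + \<epsilon>"
      using EVy[of r] r s by auto
    have t1: "0 \<le> k * \<tau> * MF" using par MF0 kpow by simp
    have t2: "0 \<le> \<sigma> * k * R" using par R kpow by simp
    from r'(3) show ?thesis
    proof
      assume a: "r - r' < \<tau>"
      have "norm (C *v x r' - C *v x r) \<le> k * norm (x r' - x r)"
        using mvk(3)[of "x r' - x r"] by (simp add: matrix_vector_mult_diff_distrib)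
      also have "norm (x r' - x r) \<le> norm (Z r' - Z r)" by (rule xdiff)
      also have "norm (Z r' - Z r) \<le> \<bar>r' - r\<bar> * MF" using a r r'(1) s by (intro Zd) (auto simp: lo_def)
      also have "\<bar>r' - r\<bar> * MF \<le> \<tau> * MF" using a r'(1) MF0 by (intro mult_right_mono) auto
      finally have "norm (C *v x r' - C *v x r) \<le> k * (\<tau> * MF)" using kpow by (simp add: mult_left_mono)
      hence "norm (C *v x r' - C *v x r) \<le> k * \<tau> * MF" by (simp add: mult.assoc)
      thus ?thesis unfolding r'(2) using t2 par(4) by (simp add: norm_minus_commute)
    next
      assume a: "norm (C *v x r' - C *v x r) \<le> \<sigma> * norm (C *v x r) + \<epsilon>"
      have "norm (x r) \<le> R" using r s par by (intro xb) auto
      hence "norm (C *v x r) \<le> k * R" using mvk(3)[of "x r"] kpow by (meson mult_left_mono order_trans)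
      hence "\<sigma> * norm (C *v x r) \<le> \<sigma> * (k * R)" using par by (simp add: mult_left_mono)
      hence "\<sigma> * norm (C *v x r) \<le> \<sigma> * k * R" by (simp add: mult.assoc)
      hence "norm (C *v x r' - C *v x r) \<le> \<sigma> * k * R + \<epsilon>" using a by linarith
      thus ?thesis unfolding r'(2) using t1 by (simp add: norm_minus_commute)
    qed
  qed
  define Fn where "Fn r = fZ (x r) (xh r) (xh r) (C *v x r) 0" for r
  have pb: "norm (F r - Fn r) \<le> Bp" if r: "t - s \<le> r" "r \<le> t" for r
  proof -
    have "norm (F r - Fn r) \<le> kf * (norm (xhs r - xh r) + norm (ys r - C *v x r) + norm (w r))"
      unfolding F_def Fn_def by (rule pert)
    also have "\<dots> \<le> kf * ((2 * \<tau> * MF + 2 * \<sigma> * R + \<epsilon>) + (k * \<tau> * MF + \<sigma> * k * R + \<epsilon>) + \<omega>0)"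
      using eub[OF r] eyb[OF r] W[of r] r s kf0 by (intro mult_left_mono add_mono) auto
    finally show ?thesis using Bp by simp
  qed
  have "norm (F t - Fn t) \<le> Bp" using pb[of t] s by auto
  hence Bp0: "0 \<le> Bp" using norm_ge_zero order_trans by blast
  define z1 where "z1 = Z (t - s)"
  define Cst where "Cst = - \<alpha>0 * V z1 + 2 * kP * R * Bp + s * (2 * kP * MF\<^sup>2 + 2 * \<alpha>0 * kP * MF * R)"
  have Iw: "(F has_integral (Z t - z1)) {t - s..t}" unfolding z1_def using s by (intro Iz) auto
  have IL: "((\<lambda>r. Bil (F r) z1 + Bil z1 (F r)) has_integral (Bil (Z t - z1) z1 + Bil z1 (Z t - z1))) {t - s..t}"
    using has_integral_linear[OF Iw bl_L[of z1]] by (simp add: o_def)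
  have pt: "Bil (F r) z1 + Bil z1 (F r) \<le> Cst" if r: "r \<in> {t - s..t}" for r
  proof -
    have rW: "lo \<le> r" "r \<le> t" using r s par by (auto simp: lo_def)
    have zr: "norm (Z r) \<le> R" using r s par by (intro win) auto
    have z1n: "norm z1 \<le> R" unfolding z1_def using s par by (intro win) auto
    have dz: "norm (z1 - Z r) \<le> s * MF"
    proof -
      have "norm (z1 - Z r) \<le> \<bar>(t - s) - r\<bar> * MF" unfolding z1_def using rW s par by (intro Zd) (auto simp: lo_def)
      also have "\<dots> \<le> s * MF" using r MF0 by (intro mult_right_mono) auto
      finally show ?thesis .
    qed
    have Fr: "norm (F r) \<le> MF" using rW Fb by (auto simp: lo_def)
    have ZrE: "Z r = stack (x r) (x r - xh r)" by (simp add: Z_def)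
    have split: "Bil (F r) z1 + Bil z1 (F r) =
        (Bil (Fn r) (Z r) + Bil (Z r) (Fn r)) + (Bil (F r - Fn r) (Z r) + Bil (Z r) (F r - Fn r))
        + (Bil (F r) (z1 - Z r) + Bil (z1 - Z r) (F r))"
      by (simp add: Bil_diff1 Bil_diff2)
    have n1: "Bil (Fn r) (Z r) + Bil (Z r) (Fn r) \<le> - \<alpha>0 * V (Z r)"
      unfolding Fn_def ZrE by (rule nom)
    have "\<bar>V (Z r) - V z1\<bar> \<le> kP * norm (Z r - z1) * (norm (Z r) + norm z1)" by (rule V_diff_bound)
    also have "\<dots> \<le> kP * (s * MF) * (2 * R)"
      using kP_pos dz zr z1n MF0 s by (intro mult_mono) (auto simp: norm_minus_commute)
    finally have vd: "\<bar>V (Z r) - V z1\<bar> \<le> kP * (s * MF) * (2 * R)" .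
    have n1': "- \<alpha>0 * V (Z r) \<le> - \<alpha>0 * V z1 + \<alpha>0 * (kP * (s * MF) * (2 * R))"
    proof -
      have "\<alpha>0 * (V z1 - V (Z r)) \<le> \<alpha>0 * (kP * (s * MF) * (2 * R))"
        using vd par by (intro mult_left_mono) auto
      thus ?thesis by (simp add: algebra_simps)
    qed
    have b1: "Bil (F r - Fn r) (Z r) \<le> kP * Bp * R"
    proof -
      have "Bil (F r - Fn r) (Z r) \<le> kP * norm (F r - Fn r) * norm (Z r)" using Bil_bound by (rule abs_le_D1)
      also have "\<dots> \<le> kP * Bp * R" using kP_pos pb[of r] zr r Bp0 by (intro mult_mono) auto
      finally show ?thesis .
    qed
    have b2: "Bil (Z r) (F r - Fn r) \<le> kP * Bp * R"
    proof -
      have "Bil (Z r) (F r - Fn r) \<le> kP * norm (Z r) * norm (F r - Fn r)" using Bil_bound by (rule abs_le_D1)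
      also have "\<dots> \<le> kP * R * Bp" using kP_pos pb[of r] zr r R Bp0 by (intro mult_mono) auto
      finally show ?thesis by (simp add: algebra_simps)
    qed
    have b3: "Bil (F r) (z1 - Z r) \<le> kP * MF * (s * MF)"
    proof -
      have "Bil (F r) (z1 - Z r) \<le> kP * norm (F r) * norm (z1 - Z r)" using Bil_bound by (rule abs_le_D1)
      also have "\<dots> \<le> kP * MF * (s * MF)" using kP_pos Fr dz MF0 by (intro mult_mono) auto
      finally show ?thesis .
    qed
    have b4: "Bil (z1 - Z r) (F r) \<le> kP * MF * (s * MF)"
    proof -
      have "Bil (z1 - Z r) (F r) \<le> kP * norm (z1 - Z r) * norm (F r)" using Bil_bound by (rule abs_le_D1)
      also have "\<dots> \<le> kP * (s * MF) * MF" using kP_pos Fr dz MF0 s by (intro mult_mono) auto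
      finally show ?thesis by (simp add: algebra_simps)
    qed
    have "Bil (F r) z1 + Bil z1 (F r) \<le> - \<alpha>0 * V z1 + \<alpha>0 * (kP * (s * MF) * (2 * R)) + 2 * (kP * Bp * R)
        + 2 * (kP * MF * (s * MF))"
      unfolding split using n1 n1' b1 b2 b3 b4 by linarith
    also have "\<dots> = Cst" by (simp add: Cst_def algebra_simps power2_eq_square)
    finally show ?thesis .
  qed
  have "Bil (Z t - z1) z1 + Bil z1 (Z t - z1) \<le> (t - (t - s)) *\<^sub>R Cst"
    using has_integral_le[OF IL has_integral_const_real[of Cst "t - s" t] pt] s by simp
  hence Lb: "Bil (Z t - z1) z1 + Bil z1 (Z t - z1) \<le> s * Cst" by simp
  have dn: "norm (Z t - z1) \<le> s * MF"
  proof -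
    have "norm (Z t - z1) \<le> \<bar>t - (t - s)\<bar> * MF" unfolding z1_def using s par by (intro Zd) (auto simp: lo_def)
    thus ?thesis using s by simp
  qed
  have "V (Z t - z1) \<le> kP * norm (Z t - z1) ^ 2" by (rule V_le)
  also have "\<dots> \<le> kP * (s * MF) ^ 2" using kP_pos dn by (intro mult_left_mono power_mono) auto
  finally have Vd: "V (Z t - z1) \<le> kP * (s * MF) ^ 2" .
  have "V (Z t) = V (z1 + (Z t - z1))" by simp
  also have "\<dots> = V z1 + (Bil (Z t - z1) z1 + Bil z1 (Z t - z1)) + V (Z t - z1)"
    using V_expand[of z1 "Z t - z1"] by (simp only: add.assoc)
  finally have "V (Z t) - V z1 \<le> s * Cst + kP * (s * MF) ^ 2" using Lb Vd by linarith
  also have "\<dots> = s * (- \<alpha>0 * V z1 + 2 * kP * R * Bp) + s\<^sup>2 * (3 * kP * MF\<^sup>2 + 2 * \<alpha>0 * kP * MF * R)"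
    by (simp add: Cst_def algebra_simps power2_eq_square)
  finally show ?thesis unfolding z1_def .
qed

end

lemma KL_exp:
  assumes "cst > 0" "m > 0"
  shows "class_KL (\<lambda>r t. cst * r * exp (- m * t))"
  unfolding class_KL_def class_K_def
proof (intro conjI allI impI)
  show "continuous_on ({0..} \<times> {0..}) (\<lambda>(r, s). cst * r * exp (- m * s))"
    by (simp add: case_prod_beta') (intro continuous_intros)
  fix s :: real assume "0 \<le> s"
  show "continuous_on {0..} (\<lambda>r. cst * r * exp (- m * s))" by (intro continuous_intros)
  show "strict_mono_on {0..} (\<lambda>r. cst * r * exp (- m * s))"
    by (rule monotone_onI) (use assms in simp)
  show "cst * 0 * exp (- m * s) = 0" by simp
next
  fix r :: real assume r: "0 \<le> r"
  show "antimono_on {0..} (\<lambda>s. cst * r * exp (- m * s))"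
    by (rule monotone_onI) (use assms r in \<open>auto intro!: mult_left_mono\<close>)
  have "((\<lambda>s. exp (- m * s)) \<longlongrightarrow> 0) at_top" using assms(2) by real_asymp
  thus "((\<lambda>s. cst * r * exp (- m * s)) \<longlongrightarrow> 0) at_top"
    by (rule tendsto_mult_right_zero)
qed

lemma K_id: "class_K (\<lambda>r. r)"
  unfolding class_K_def by (auto intro: monotone_onI continuous_intros)

lemma conv1:
  fixes R \<delta> kP c1 l1 \<kappa> :: real
  assumes "0 \<le> R" "0 < \<delta>" "0 < l1"
  shows "2 * kP * R * (\<kappa> * R + c1) \<le> ((2 * kP * \<kappa> + \<delta>) / l1) * (l1 * R\<^sup>2) + (kP * c1)\<^sup>2 / \<delta>"
proof -
  have "0 \<le> (\<delta> * R - kP * c1)\<^sup>2" by simp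
  hence "2 * \<delta> * (kP * c1 * R) \<le> \<delta>\<^sup>2 * R\<^sup>2 + (kP * c1)\<^sup>2" by (simp add: power2_eq_square algebra_simps)
  hence "2 * (kP * c1 * R) \<le> \<delta> * R\<^sup>2 + (kP * c1)\<^sup>2 / \<delta>" using assms(2)
    by (simp add: field_simps power2_eq_square)
  moreover have "((2 * kP * \<kappa> + \<delta>) / l1) * (l1 * R\<^sup>2) = (2 * kP * \<kappa> + \<delta>) * R\<^sup>2" using assms(3) by simp
  ultimately show ?thesis by (simp add: algebra_simps power2_eq_square)
qed

lemma conv2:
  fixes R kP a m1 m0 l1 :: real
  assumes "0 \<le> R" "0 \<le> kP" "0 \<le> a" "0 \<le> m1" "0 \<le> m0" "0 < l1"
  shows "3 * kP * (m1 * R + m0)\<^sup>2 + 2 * a * kP * (m1 * R + m0) * R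
     \<le> ((6 * kP * m1\<^sup>2 + 2 * a * kP * m1 + a * kP) / l1) * (l1 * R\<^sup>2) + (6 * kP * m0\<^sup>2 + a * kP * m0\<^sup>2)"
proof -
  have s1: "(m1 * R + m0)\<^sup>2 \<le> 2 * (m1\<^sup>2 * R\<^sup>2) + 2 * m0\<^sup>2"
    using zero_le_power2[of "m1 * R - m0"] by (simp add: power2_eq_square algebra_simps)
  have s2: "m0 * R \<le> (R\<^sup>2 + m0\<^sup>2) / 2"
    using zero_le_power2[of "R - m0"] by (simp add: power2_eq_square algebra_simps)
  have A0: "3 * kP * (m1 * R + m0)\<^sup>2 \<le> 3 * kP * (2 * (m1\<^sup>2 * R\<^sup>2) + 2 * m0\<^sup>2)"
    using s1 assms by (intro mult_left_mono) auto
  have A: "3 * kP * (m1 * R + m0)\<^sup>2 \<le> 6 * (kP * m1\<^sup>2 * R\<^sup>2) + 6 * (kP * m0\<^sup>2)"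
    using A0 by (simp add: algebra_simps)
  have B: "2 * a * kP * (m1 * R + m0) * R = 2 * (a * kP * m1 * R\<^sup>2) + 2 * (a * kP * (m0 * R))"
    by (simp add: algebra_simps power2_eq_square)
  have C0: "2 * (a * kP) * (m0 * R) \<le> 2 * (a * kP) * ((R\<^sup>2 + m0\<^sup>2) / 2)"
    using s2 assms by (intro mult_left_mono) auto
  have C: "2 * (a * kP * (m0 * R)) \<le> a * kP * R\<^sup>2 + a * kP * m0\<^sup>2"
    using C0 by (simp add: algebra_simps)
  have D: "((6 * kP * m1\<^sup>2 + 2 * a * kP * m1 + a * kP) / l1) * (l1 * R\<^sup>2) + (6 * kP * m0\<^sup>2 + a * kP * m0\<^sup>2)
      = 6 * (kP * m1\<^sup>2 * R\<^sup>2) + 2 * (a * kP * m1 * R\<^sup>2) + a * kP * R\<^sup>2 + 6 * (kP * m0\<^sup>2) + a * kP * m0\<^sup>2"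
    using assms by (simp add: field_simps)
  show ?thesis unfolding D B using A C by linarith
qed


theorem theorem6:
  fixes A :: "real^'x^'x" and B :: "real^'u^'x" and C :: "real^'x^'y" and Cq :: "real^'x^'q"
    and E :: "real^'p^'x" and Ew :: "real^'w^'x" and p :: "real^'q \<Rightarrow> real^'p"
    and K1 :: "real^'x^'u" and K2 :: "real^'p^'u" and L1 :: "real^'y^'q" and L2 :: "real^'y^'x"
    and P :: "real^('x + 'x)^('x + 'x)" and \<alpha>0 \<mu> \<omega>0 :: real
  assumes p0: "p 0 = 0"
    and p_lip: "\<exists>Lp. Lp-lipschitz_on UNIV p"
    and \<omega>0_pos: "\<omega>0 > 0"
    and \<alpha>0_pos: "\<alpha>0 > 0"
    and \<mu>_pos: "\<mu> > 0"
    and P_sym: "transpose P = P"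
    and P_pos: "\<forall>z. z \<noteq> 0 \<longrightarrow> z \<bullet> (P *v z) > 0"
    and nominal: "\<forall>x xh.
      let u = K1 *v xh + K2 *v p (Cq *v xh);
          dx = A *v x + B *v u + E *v p (Cq *v x);
          dxh = A *v xh + B *v u + E *v p (Cq *v xh + L1 *v (C *v xh - C *v x))
                + L2 *v (C *v xh - C *v x);
          z = stack x (x - xh);
          dz = stack dx (dx - dxh)
      in dz \<bullet> (P *v z) + z \<bullet> (P *v dz) \<le> - \<alpha>0 * (z \<bullet> (P *v z))"
  shows "\<exists>\<tau>y \<sigma>y \<epsilon>y \<tau>u \<sigma>u \<epsilon>u.
           \<tau>y > 0 \<and> \<sigma>y > 0 \<and> \<epsilon>y > 0 \<and> \<tau>u > 0 \<and> \<sigma>u > 0 \<and> \<epsilon>u > 0 \<and>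
           (\<exists>\<beta>1 \<beta>2 d. class_KL \<beta>1 \<and> class_K \<beta>2 \<and> d \<ge> 0 \<and>
              (\<forall>w x xh ty tu ys xhs.
                 w \<in> borel_measurable (lebesgue_on {0..}) \<and> (\<forall>t\<ge>0. norm (w t) \<le> \<omega>0) \<and>
                 etm_solution A B C Cq E Ew p K1 K2 L1 L2 \<tau>y \<sigma>y \<epsilon>y \<tau>u \<sigma>u \<epsilon>u
                   w x xh ty tu ys xhs
                 \<longrightarrow> (\<forall>t\<ge>0. norm (stack (x t) (x t - xh t))
                        \<le> \<beta>1 (norm (stack (x 0) (x 0 - xh 0))) t
                          + \<beta>2 (SUP s\<in>{0..}. norm (w s)) + d)))"
proof -
  obtain Lp where lip: "Lp-lipschitz_on UNIV p" using p_lip by blast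
  interpret pl: plant A B C Cq E Ew p K1 K2 L1 L2 P \<alpha>0 Lp
    using p0 lip nominal by unfold_locales
  obtain l1 where l1: "l1 > 0" "\<And>z. l1 * norm z ^ 2 \<le> z \<bullet> (P *v z)" using posdef_lower[OF P_pos] by blast
  have kf0: "0 < pl.kf" unfolding pl.kf_def using pl.k_ge1 by simp
  have k0: "0 \<le> pl.k" using pl.kpow by simp
  have kP0: "0 < pl.kP" by (rule pl.kP_pos)
  define m1 where "m1 = 3 * pl.kf * (7 + 2 * pl.k)"
  define m0 where "m0 = 3 * pl.kf * (2 + \<omega>0)"
  have m1p: "0 < m1" unfolding m1_def using kf0 k0 by simp
  have m0p: "0 \<le> m0" unfolding m0_def using kf0 \<omega>0_pos by simp
  define ee where "ee = exp (- \<alpha>0)"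
  have ee: "0 < ee" "ee \<le> 1" "ee * exp \<alpha>0 = 1" unfolding ee_def using \<alpha>0_pos by (auto simp: exp_minus field_simps)
  define Y where "Y = 8 * pl.kP * pl.kf * (2 + pl.k) * (m1 + 1)"
  have Yp: "0 < Y" unfolding Y_def using kP0 kf0 k0 m1p by simp
  define \<theta> where "\<theta> = min 1 (l1 * \<alpha>0 * ee / Y)"
  have th: "0 < \<theta>" "\<theta> \<le> 1" "Y * \<theta> \<le> l1 * \<alpha>0 * ee"
  proof -
    show "0 < \<theta>" unfolding \<theta>_def using l1 \<alpha>0_pos ee Yp by simp
    show "\<theta> \<le> 1" unfolding \<theta>_def by simp
    have "\<theta> \<le> l1 * \<alpha>0 * ee / Y" unfolding \<theta>_def by simp
    thus "Y * \<theta> \<le> l1 * \<alpha>0 * ee" using Yp by (simp add: field_simps)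
  qed
  define \<kappa> where "\<kappa> = pl.kf * (2 + pl.k) * (\<theta> * m1 + \<theta>)"
  define c1 where "c1 = pl.kf * ((2 + pl.k) * \<theta> * m0 + 2 + \<omega>0)"
  define \<delta> where "\<delta> = l1 * \<alpha>0 * ee / 4"
  have dp: "0 < \<delta>" unfolding \<delta>_def using l1 \<alpha>0_pos ee by simp
  define b where "b = (2 * pl.kP * \<kappa> + \<delta>) / l1"
  define c where "c = (pl.kP * c1)\<^sup>2 / \<delta>"
  define q1 where "q1 = (6 * pl.kP * m1\<^sup>2 + 2 * \<alpha>0 * pl.kP * m1 + \<alpha>0 * pl.kP) / l1"
  define q0 where "q0 = 6 * pl.kP * m0\<^sup>2 + \<alpha>0 * pl.kP * m0\<^sup>2"
  define lam where "lam = \<alpha>0 / 2"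
  have kap: "8 * pl.kP * \<kappa> \<le> l1 * \<alpha>0 * ee"
  proof -
    have "8 * pl.kP * \<kappa> = Y * \<theta>" unfolding \<kappa>_def Y_def by (simp add: algebra_simps)
    thus ?thesis using th by simp
  qed
  have b0: "0 \<le> b" unfolding b_def \<kappa>_def using kP0 kf0 k0 th m1p dp l1 by (simp add: less_imp_le)
  have ble: "b \<le> \<alpha>0 * ee / 2"
  proof -
    have "2 * pl.kP * \<kappa> + \<delta> = (8 * pl.kP * \<kappa>) / 4 + l1 * \<alpha>0 * ee / 4" by (simp add: \<delta>_def algebra_simps)
    hence "2 * pl.kP * \<kappa> + \<delta> \<le> l1 * \<alpha>0 * ee / 2" using kap by linarith
    thus ?thesis unfolding b_def using l1 by (simp add: field_simps)
  qed
  have ba: "b < \<alpha>0"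
  proof -
    have "\<alpha>0 * ee / 2 < \<alpha>0" using ee \<alpha>0_pos by (simp add: field_simps)
    thus ?thesis using ble by simp
  qed
  have coef: "lam + b * exp (lam * (2 * \<theta>)) \<le> \<alpha>0"
  proof -
    have "exp (lam * (2 * \<theta>)) \<le> exp \<alpha>0" unfolding lam_def using th \<alpha>0_pos by (simp add: mult_left_le)
    hence "b * exp (lam * (2 * \<theta>)) \<le> (\<alpha>0 * ee / 2) * exp \<alpha>0" using b0 ble by (intro mult_mono) auto
    also have "\<dots> = \<alpha>0 / 2" using ee(3) by (simp add: field_simps)
    finally show ?thesis unfolding lam_def by simp
  qed
  define D where "D = c / (\<alpha>0 - b) + 1"
  have c0: "0 \<le> c" unfolding c_def using dp by simp
  have D0: "0 \<le> D" unfolding D_def using c0 ba by simp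
  have "(\<alpha>0 - b) * D = c + (\<alpha>0 - b)" unfolding D_def using ba by (simp add: distrib_left)
  hence Dc: "c < (\<alpha>0 - b) * D" using ba by linarith
  define cst where "cst = sqrt (pl.kP / l1)"
  have cst0: "0 < cst" unfolding cst_def using kP0 l1 by simp
  define d where "d = sqrt (D / l1)"
  have KL: "class_KL (\<lambda>r t. cst * r * exp (- (lam / 2) * t))" using cst0 \<alpha>0_pos by (intro KL_exp) (auto simp: lam_def)
  have d0: "0 \<le> d" unfolding d_def using D0 l1 by simp
  have MAIN: "\<forall>w x xh ty tu ys xhs.
                 w \<in> borel_measurable (lebesgue_on {0..}) \<and> (\<forall>t\<ge>0. norm (w t) \<le> \<omega>0) \<and>
                 etm_solution A B C Cq E Ew p K1 K2 L1 L2 \<theta> \<theta> 1 \<theta> \<theta> 1 w x xh ty tu ys xhs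
                 \<longrightarrow> (\<forall>t\<ge>0. norm (stack (x t) (x t - xh t))
                        \<le> (\<lambda>r t. cst * r * exp (- (lam / 2) * t)) (norm (stack (x 0) (x 0 - xh 0))) t
                          + (\<lambda>r. r) (SUP s\<in>{0..}. norm (w s)) + d)"
  proof (intro allI impI)
    fix w x xh ty tu ys xhs and t :: real
    assume H: "w \<in> borel_measurable (lebesgue_on {0..}) \<and> (\<forall>t\<ge>0. norm (w t) \<le> \<omega>0) \<and>
                 etm_solution A B C Cq E Ew p K1 K2 L1 L2 \<theta> \<theta> 1 \<theta> \<theta> 1 w x xh ty tu ys xhs"
      and t: "0 \<le> t"
    have W: "\<And>r. r \<ge> 0 \<Longrightarrow> norm (w r) \<le> \<omega>0" using H by blast
    have sol: "etm_solution A B C Cq E Ew p K1 K2 L1 L2 \<theta> \<theta> 1 \<theta> \<theta> 1 w x xh ty tu ys xhs" using H by blast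
    note S = sol[unfolded etm_solution_def]
    define Z where "Z = (\<lambda>r. stack (x r) (x r - xh r))"
    define F where "F = (\<lambda>r. pl.fZ (x r) (xh r) (xhs r) (ys r) (w r))"
    have I0: "(F has_integral (Z t' - Z 0)) {0..t'}" if "t' \<ge> 0" for t'
    proof -
      have ix: "((\<lambda>s. pl.fX (x s) (xhs s) (w s)) has_integral (x t' - x 0)) {0..t'}"
        using S that unfolding pl.fX_def pl.ctrl_def by blast
      have ih: "((\<lambda>s. pl.fH (x s) (xh s) (xhs s) (ys s)) has_integral (xh t' - xh 0)) {0..t'}"
        using S that unfolding pl.fH_def pl.ctrl_def by blast
      have "(F has_integral stack (x t' - x 0) ((x t' - x 0) - (xh t' - xh 0))) {0..t'}"
        unfolding F_def pl.fZ_def by (intro has_integral_stack has_integral_diff ix ih)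
      moreover have "stack (x t' - x 0) ((x t' - x 0) - (xh t' - xh 0)) = Z t' - Z 0"
        unfolding Z_def stack_diff[symmetric] by (simp add: algebra_simps)
      ultimately show ?thesis by simp
    qed
    have Iz: "(F has_integral (Z b' - Z a')) {a'..b'}" if "0 \<le> a'" "a' \<le> b'" for a' b'
      by (rule integral_sub[OF I0 that])
    have EVu: "\<exists>r\<in>{0..q}. xhs q = xh r \<and> (q - r < \<theta> \<or> norm (xh r - xh q) \<le> \<theta> * norm (xh q) + 1)"
      if "q \<ge> 0" for q
      by (rule event_hold[where tk=tu and g=xh and h=xhs]) (use S th that in auto)
    have EVy: "\<exists>r\<in>{0..q}. ys q = C *v x r \<and> (q - r < \<theta> \<or> norm (C *v x r - C *v x q) \<le> \<theta> * norm (C *v x q) + 1)"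
      if "q \<ge> 0" for q
      using event_hold[where tk=ty and g="\<lambda>t. C *v x t" and h=ys and \<tau>=\<theta> and \<sigma>=\<theta> and \<epsilon>=1] S th that by auto
    define u where "u = (\<lambda>r. pl.V (Z r))"
    have ucont: "continuous_on {0..T} u" for T
    proof -
      have "continuous_on {0..T} (\<lambda>r. Z 0 + integral {0..r} F)"
      proof (cases "T \<ge> 0")
        case True
        have "F integrable_on {0..T}" using I0[OF True] by blast
        thus ?thesis by (intro continuous_intros indefinite_integral_continuous_1)
      next
        case False thus ?thesis by simp
      qed
      moreover have "Z r = Z 0 + integral {0..r} F" if "r \<in> {0..T}" for r
        using I0[of r] that by (simp add: integral_unique)
      ultimately have zc: "continuous_on {0..T} Z" using continuous_on_cong by (smt (verit))
      show ?thesis unfolding u_def pl.V_def pl.Bil_def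
        by (intro continuous_intros continuous_on_compose2[OF linear_continuous_on zc]) auto
    qed
    have ulow: "l1 * norm (Z r) ^ 2 \<le> u r" for r unfolding u_def pl.V_def pl.Bil_def by (rule l1(2))
    have stepH: "u t' - u (t' - s) \<le> s * (- \<alpha>0 * u (t' - s) + b * G + c) + s\<^sup>2 * (q1 * G + q0)"
      if s: "0 < s" "s \<le> 1" "s \<le> t'" and G: "0 \<le> G"
        and win: "\<And>q. max 0 (t' - s - 2 * \<theta>) \<le> q \<Longrightarrow> q \<le> t' \<Longrightarrow> u q \<le> G" for t' s G
    proof -
      define R where "R = sqrt (G / l1)"
      have R0: "0 \<le> R" unfolding R_def using G l1 by simp
      have R2: "R\<^sup>2 = G / l1" unfolding R_def using G l1 by simp
      have GR: "G = l1 * R\<^sup>2" using R2 l1 by simp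
      have zw: "norm (Z q) \<le> R" if "max 0 (t' - s - 2 * \<theta>) \<le> q" "q \<le> t'" for q
      proof -
        have "l1 * norm (Z q) ^ 2 \<le> G" using ulow[of q] win[OF that] by linarith
        hence "norm (Z q) ^ 2 \<le> G / l1" using l1 by (simp add: field_simps)
        thus ?thesis unfolding R_def by (rule real_le_rsqrt)
      qed
      have MF: "3 * pl.kf * (R + 2 * R + (4 * R + 1) + ((1 + \<theta>) * pl.k * R + 1) + \<omega>0) \<le> m1 * R + m0"
      proof -
        have "(1 + \<theta>) * pl.k * R \<le> 2 * pl.k * R" using th k0 R0 by (intro mult_right_mono) auto
        hence "R + 2 * R + (4 * R + 1) + ((1 + \<theta>) * pl.k * R + 1) + \<omega>0 \<le> (7 + 2 * pl.k) * R + (2 + \<omega>0)"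
          by (simp add: algebra_simps)
        hence "3 * pl.kf * (R + 2 * R + (4 * R + 1) + ((1 + \<theta>) * pl.k * R + 1) + \<omega>0)
            \<le> 3 * pl.kf * ((7 + 2 * pl.k) * R + (2 + \<omega>0))" using kf0 by (intro mult_left_mono) auto
        thus ?thesis unfolding m1_def m0_def by (simp add: algebra_simps)
      qed
      have Bp: "pl.kf * ((2 * \<theta> * (m1 * R + m0) + 2 * \<theta> * R + 1) + (pl.k * \<theta> * (m1 * R + m0) + \<theta> * pl.k * R + 1) + \<omega>0)
          \<le> \<kappa> * R + c1"
        unfolding \<kappa>_def c1_def by (simp add: algebra_simps)
      have st: "pl.V (Z t') - pl.V (Z (t' - s)) \<le> s * (- \<alpha>0 * pl.V (Z (t' - s)) + 2 * pl.kP * R * (\<kappa> * R + c1))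
            + s\<^sup>2 * (3 * pl.kP * (m1 * R + m0)\<^sup>2 + 2 * \<alpha>0 * pl.kP * (m1 * R + m0) * R)"
        unfolding Z_def
        by (rule pl.step[where \<tau>=\<theta> and \<sigma>=\<theta> and \<epsilon>=1 and xhs=xhs and ys=ys and w=w,
              OF Iz[unfolded Z_def F_def] EVu EVy W _ _ _ _ _ _ s(1) s(3) R0 zw[unfolded Z_def] MF Bp])
           (use th \<omega>0_pos \<alpha>0_pos in auto)
      have e1: "2 * pl.kP * R * (\<kappa> * R + c1) \<le> b * G + c"
        unfolding GR b_def c_def by (rule conv1[OF R0 dp l1(1)])
      have e2: "3 * pl.kP * (m1 * R + m0)\<^sup>2 + 2 * \<alpha>0 * pl.kP * (m1 * R + m0) * R \<le> q1 * G + q0"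
        unfolding GR q1_def q0_def using R0 kP0 \<alpha>0_pos m1p m0p l1 by (intro conv2) auto
      have "s * (- \<alpha>0 * pl.V (Z (t' - s)) + 2 * pl.kP * R * (\<kappa> * R + c1)) \<le> s * (- \<alpha>0 * u (t' - s) + b * G + c)"
        using e1 s by (intro mult_left_mono) (auto simp: u_def)
      moreover have "s\<^sup>2 * (3 * pl.kP * (m1 * R + m0)\<^sup>2 + 2 * \<alpha>0 * pl.kP * (m1 * R + m0) * R) \<le> s\<^sup>2 * (q1 * G + q0)"
        using e2 by (intro mult_left_mono) auto
      ultimately show ?thesis using st unfolding u_def by linarith
    qed
    have init: "u 0 \<le> pl.kP * norm (Z 0) ^ 2 + D" unfolding u_def using pl.V_le[of "Z 0"] D0 by linarith
    have ub: "u t \<le> pl.kP * norm (Z 0) ^ 2 * exp (- lam * t) + D"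
      by (rule halanay[OF ucont _ _ b0 _ _ _ D0 coef ba Dc init stepH t])
         (use \<alpha>0_pos th kP0 in \<open>auto simp: lam_def\<close>)
    have "l1 * norm (Z t) ^ 2 \<le> pl.kP * norm (Z 0) ^ 2 * exp (- lam * t) + D" using ulow[of t] ub by linarith
    hence "norm (Z t) ^ 2 \<le> (pl.kP / l1) * norm (Z 0) ^ 2 * exp (- lam * t) + D / l1"
      using l1 by (simp add: field_simps)
    hence "norm (Z t) \<le> sqrt ((pl.kP / l1) * norm (Z 0) ^ 2 * exp (- lam * t) + D / l1)" by (rule real_le_rsqrt)
    also have "\<dots> \<le> sqrt ((pl.kP / l1) * norm (Z 0) ^ 2 * exp (- lam * t)) + sqrt (D / l1)"
      using kP0 l1 D0 by (intro sqrt_add_le_add_sqrt) auto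
    also have "sqrt ((pl.kP / l1) * norm (Z 0) ^ 2 * exp (- lam * t)) = cst * norm (Z 0) * exp (- (lam / 2) * t)"
    proof -
      have "exp (- lam * t) = (exp (- (lam / 2) * t))\<^sup>2"
        by (simp add: power2_eq_square exp_add[symmetric])
      hence "(pl.kP / l1) * norm (Z 0) ^ 2 * exp (- lam * t) = (pl.kP / l1) * (norm (Z 0) * exp (- (lam / 2) * t))\<^sup>2"
        by (simp add: power_mult_distrib)
      hence "sqrt ((pl.kP / l1) * norm (Z 0) ^ 2 * exp (- lam * t)) = sqrt (pl.kP / l1) * sqrt ((norm (Z 0) * exp (- (lam / 2) * t))\<^sup>2)"
        by (simp only: real_sqrt_mult)
      thus ?thesis unfolding cst_def by simp
    qed
    finally have fin: "norm (Z t) \<le> cst * norm (Z 0) * exp (- (lam / 2) * t) + d" unfolding d_def .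
    have "0 \<le> (SUP s\<in>{0..}. norm (w s))"
    proof -
      have "bdd_above ((\<lambda>s. norm (w s)) ` {0..})" using W by (intro bdd_aboveI2[of _ _ \<omega>0]) auto
      thus ?thesis by (rule cSUP_upper2[where x=0]) auto
    qed
    thus "norm (stack (x t) (x t - xh t)) \<le> (\<lambda>r t. cst * r * exp (- (lam / 2) * t)) (norm (stack (x 0) (x 0 - xh 0))) t
        + (\<lambda>r. r) (SUP s\<in>{0..}. norm (w s)) + d"
      using fin unfolding Z_def by simp
  qed
  show ?thesis
    apply (rule exI[of _ \<theta>], rule exI[of _ \<theta>], rule exI[of _ 1], rule exI[of _ \<theta>], rule exI[of _ \<theta>], rule exI[of _ 1])
    apply (intro conjI th(1) zero_less_one)
    apply (rule exI[of _ "\<lambda>r t. cst * r * exp (- (lam / 2) * t)"], rule exI[of _ "\<lambda>r. r"], rule exI[of _ d])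
    apply (intro conjI KL K_id d0)
    by (rule MAIN)
qed

end
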